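(* Let $f(r)=r$, let $q_0\in\mathbb R^3\setminus\Sigma$, and let $\gamma$ be an arc-length parametrized normal trajectory from $q_0$ with initial covector $\lambda_0=(u_0,v_0,w_0)\in E_1$. Then $$t_{\mathrm{con}}(\gamma)=\frac{\pi}{|w_0|},$$ with the convention $t_{\mathrm{con}}(\gamma)=+\infty$ when $w_0=0$ (the straight-line geodesics).
   Context: Consider $\mathbb R^3$ with points $q=(x,y,z)$, $r=\sqrt{x^2+y^2}$, $\Sigma=\{r=0\}$, and $f(r)=r$. Let $q_0=(x_0,y_0,z_0)$ and $r_0=\sqrt{x_0^2+y_0^2}$. Normal trajectories are projections of solutions of $$\dot x=u,\quad \dot y=v,\quad \dot z=r^2w,\quad \dot u=-w^2x,\quad \dot v=-w^2y,\quad \dot w=0,$$ with initial covector $\lambda_0=(u_0,v_0,w_0)$. The unit energy shell is $E_1=\{\lambda_0:u_0^2+v_0^2+r_0^2w_0^2=1\}$. Exponential map and conjugate time: - $\mathrm{Exp}_{q_0}(\lambda_0)=\gamma(1;\lambda_0)$. - $t_{\mathrm{con}}(\gamma)=\inf\{t>0:\mathrm{Exp}_{q_0}\text{ has a critical point at }t\lambda_0\}$. *)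

theory Defs
  imports "HOL-Analysis.Analysis" "HOL-Library.Extended_Real"
begin

text \<open>The normal (Hamiltonian) system for f(r) = r, i.e. z' = r^2 w with r^2 = x^2 + y^2,
  with initial point q0 and initial covector l0, solved by six real functions of t.\<close>

definition normal_sys ::
  "real \<times> real \<times> real \<Rightarrow> real \<times> real \<times> real \<Rightarrow>
   (real \<Rightarrow> real) \<Rightarrow> (real \<Rightarrow> real) \<Rightarrow> (real \<Rightarrow> real) \<Rightarrow>
   (real \<Rightarrow> real) \<Rightarrow> (real \<Rightarrow> real) \<Rightarrow> (real \<Rightarrow> real) \<Rightarrow> bool" where
  "normal_sys q0 l0 X Y Z U V W \<longleftrightarrow>
     (X 0, Y 0, Z 0) = q0 \<and> (U 0, V 0, W 0) = l0 \<and>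
     (\<forall>t. (X has_real_derivative U t) (at t) \<and>
          (Y has_real_derivative V t) (at t) \<and>
          (Z has_real_derivative ((X t)\<^sup>2 + (Y t)\<^sup>2) * W t) (at t) \<and>
          (U has_real_derivative - ((W t)\<^sup>2 * X t)) (at t) \<and>
          (V has_real_derivative - ((W t)\<^sup>2 * Y t)) (at t) \<and>
          (W has_real_derivative 0) (at t))"

text \<open>The normal trajectory gamma(t; l0) from q0: projection of the (unique, global) solution.\<close>
definition normal_traj :: "real \<times> real \<times> real \<Rightarrow> real \<times> real \<times> real \<Rightarrow> real \<Rightarrow> real \<times> real \<times> real" where
  "normal_traj q0 l0 = (THE \<gamma>. \<exists>X Y Z U V W. normal_sys q0 l0 X Y Z U V W \<and>
                                 \<gamma> = (\<lambda>t. (X t, Y t, Z t)))"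

definition Exp_map :: "real \<times> real \<times> real \<Rightarrow> real \<times> real \<times> real \<Rightarrow> real \<times> real \<times> real" where
  "Exp_map q0 l0 = normal_traj q0 l0 1"

definition critical_point :: "('a::real_normed_vector \<Rightarrow> 'b::real_normed_vector) \<Rightarrow> 'a \<Rightarrow> bool" where
  "critical_point F p \<longleftrightarrow> (\<exists>D. (F has_derivative D) (at p) \<and> \<not> surj D)"

text \<open>Conjugate time as an extended real; the infimum of the empty set is +infinity.\<close>
definition t_con :: "real \<times> real \<times> real \<Rightarrow> real \<times> real \<times> real \<Rightarrow> ereal" where
  "t_con q0 l0 = Inf (ereal ` {t. t > 0 \<and> critical_point (Exp_map q0) (t *\<^sub>R l0)})"

end

theory Submission
  imports Defs "HOL-Real_Asymp.Real_Asymp"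
begin


definition Xs :: "real \<Rightarrow> real \<Rightarrow> real \<Rightarrow> real \<Rightarrow> real" where
  "Xs x0 u w t = (if w = 0 then x0 + u * t else x0  *  cos (w * t) + u  *  sin (w * t) / w)"
definition Us :: "real \<Rightarrow> real \<Rightarrow> real \<Rightarrow> real \<Rightarrow> real" where
  "Us x0 u w t = (if w = 0 then u else u  *  cos (w * t) - x0  *  w  *  sin (w * t))"
definition Zs :: "real \<Rightarrow> real \<Rightarrow> real \<Rightarrow> real \<Rightarrow> real \<Rightarrow> real \<Rightarrow> real \<Rightarrow> real" where
  "Zs x0 y0 z0 u v w t = (if w = 0 then z0 else z0 + (x0^2+y0^2) * (w * t + sin(w * t) * cos(w * t))/2
      + (x0 * u+y0 * v) * (sin(w * t))^2/w + (u^2+v^2) * (w * t - sin(w * t) * cos(w * t))/(2 * w^2))"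

lemma Xs_deriv: "(Xs x0 u w has_real_derivative Us x0 u w t) (at t)"
proof (cases "w = 0")
  case True
  then show ?thesis unfolding Xs_def Us_def
    by (auto intro!: derivative_eq_intros)
next
  case False
  then show ?thesis unfolding Xs_def Us_def
    by (auto intro!: derivative_eq_intros simp: field_simps)
qed

lemma Us_deriv: "(Us x0 u w has_real_derivative - ((w)^2  *  Xs x0 u w t)) (at t)"
proof (cases "w = 0")
  case True
  then show ?thesis unfolding Xs_def Us_def
    by (auto intro!: derivative_eq_intros)
next
  case False
  then show ?thesis unfolding Xs_def Us_def
    by (auto intro!: derivative_eq_intros simp: field_simps power2_eq_square)
qed

lemma d1: "((\<lambda>t. w * t + sin (w * t) * cos (w * t)) has_real_derivative 2 * w * (cos (w * t))^2) (at t)"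
  apply (auto intro!: derivative_eq_intros simp: algebra_simps power2_eq_square)
  by (metis distrib_left mult.right_neutral sin_cos_squared_add3)

lemma d2: "((\<lambda>t. w * t - sin (w * t) * cos (w * t)) has_real_derivative 2 * w * (sin (w * t))^2) (at t)"
  apply (auto intro!: derivative_eq_intros simp: algebra_simps power2_eq_square)
  by (metis distrib_left mult.right_neutral sin_cos_squared_add3)

lemma d3: "((\<lambda>t. (sin (w * t))^2) has_real_derivative 2 * w * sin (w * t) * cos (w * t)) (at t)"
  by (auto intro!: derivative_eq_intros)

lemma Zs_deriv: "(Zs x0 y0 z0 u v w has_real_derivative ((Xs x0 u w t)^2 + (Xs y0 v w t)^2) * w) (at t)"
proof (cases "w = 0")
  case True
  then show ?thesis unfolding Xs_def Zs_def
    by (auto intro!: derivative_eq_intros)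
next
  case False
  define g1 where "g1 = (\<lambda>t. w * t + sin (w * t) * cos (w * t))"
  define g2 where "g2 = (\<lambda>t. w * t - sin (w * t) * cos (w * t))"
  define g3 where "g3 = (\<lambda>t. (sin (w * t))^2)"
  have D1: "(g1 has_real_derivative 2 * w * (cos (w * t))^2) (at t)" unfolding g1_def by (rule d1)
  have D2: "(g2 has_real_derivative 2 * w * (sin (w * t))^2) (at t)" unfolding g2_def by (rule d2)
  have D3: "(g3 has_real_derivative 2 * w * sin (w * t) * cos (w * t)) (at t)" unfolding g3_def by (rule d3)
  have "((\<lambda>t. z0 + (x0^2+y0^2) * g1 t/2
      + (x0 * u+y0 * v) * g3 t/w + (u^2+v^2) * g2 t/(2 * w^2))
     has_real_derivative (x0^2+y0^2) * (2 * w * (cos (w * t))^2)/2 + (x0 * u+y0 * v) * (2 * w * sin (w * t) * cos (w * t))/w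
      + (u^2+v^2) * (2 * w * (sin (w * t))^2)/(2 * w^2)) (at t)"
    using False by (auto intro!: derivative_eq_intros D1 D2 D3 simp: field_simps power2_eq_square)
  moreover have "(x0^2+y0^2) * (2 * w * (cos (w * t))^2)/2 + (x0 * u+y0 * v) * (2 * w * sin (w * t) * cos (w * t))/w
      + (u^2+v^2) * (2 * w * (sin (w * t))^2)/(2 * w^2) = ((Xs x0 u w t)^2 + (Xs y0 v w t)^2) * w"
    using False unfolding Xs_def by (simp add: field_simps power2_eq_square)
  ultimately show ?thesis using False unfolding Zs_def g1_def g2_def g3_def by simp
qed

lemma osc_unique:
  fixes X U Xb Ub :: "real \<Rightarrow> real"
  assumes h1: "\<And>t. (X has_real_derivative U t) (at t)"
    and h2: "\<And>t. (U has_real_derivative -(w^2 * X t)) (at t)"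
    and h3: "\<And>t. (Xb has_real_derivative Ub t) (at t)"
    and h4: "\<And>t. (Ub has_real_derivative -(w^2 * Xb t)) (at t)"
    and i1: "X 0 = Xb 0" and i2: "U 0 = Ub 0"
  shows "X t = Xb t"
proof -
  define E where "E s = w^2 * (X s - Xb s)^2 + (U s - Ub s)^2" for s
  have "\<forall>s. (E has_real_derivative 0) (at s)"
  proof
    fix s
    show "(E has_real_derivative 0) (at s)"
      unfolding E_def[abs_def]
      by (auto intro!: derivative_eq_intros h1 h2 h3 h4 simp: algebra_simps)
  qed
  then have E0: "E s = 0" for s
    using DERIV_isconst_all[of E s 0] i1 i2 by (simp add: E_def)
  have "U s = Ub s" for s
  proof -
    have "0 \<le> w^2 * (X s - Xb s)^2" by simp
    moreover have "0 \<le> (U s - Ub s)^2" by simp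
    ultimately have "(U s - Ub s)^2 = 0" using E0[of s] unfolding E_def by linarith
    then show ?thesis by simp
  qed
  then have "\<forall>s. ((\<lambda>s. X s - Xb s) has_real_derivative 0) (at s)"
    by (metis (no_types) DERIV_diff diff_self h1 h3)
  then have "X t - Xb t = X 0 - Xb 0"
    using DERIV_isconst_all[of "\<lambda>s. X s - Xb s" t 0] by simp
  then show ?thesis using i1 by simp
qed

lemma Xs0[simp]: "Xs x0 u w 0 = x0" by (simp add: Xs_def)
lemma Us0[simp]: "Us x0 u w 0 = u" by (simp add: Us_def)
lemma Zs0[simp]: "Zs x0 y0 z0 u v w 0 = z0" by (simp add: Zs_def)

lemma sol_sys: "normal_sys (x0,y0,z0) (u,v,w) (Xs x0 u w) (Xs y0 v w) (Zs x0 y0 z0 u v w)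
   (Us x0 u w) (Us y0 v w) (\<lambda>_. w)"
  unfolding normal_sys_def
  by (auto simp: Xs_deriv Us_deriv Zs_deriv)

lemma sys_unique:
  assumes "normal_sys (x0,y0,z0) (u,v,w) X Y Z U V W"
  shows "X = Xs x0 u w \<and> Y = Xs y0 v w \<and> Z = Zs x0 y0 z0 u v w"
proof -
  note a = assms[unfolded normal_sys_def]
  have W: "W t = w" for t
    using DERIV_isconst_all[of W t 0] a by auto
  have X: "X t = Xs x0 u w t" for t
    apply (rule osc_unique[where w=w and X=X and U=U and Xb="Xs x0 u w" and Ub="Us x0 u w"])
    using a W by (auto simp: Xs_deriv Us_deriv)
  have Y: "Y t = Xs y0 v w t" for t
    apply (rule osc_unique[where w=w and X=Y and U=V and Xb="Xs y0 v w" and Ub="Us y0 v w"])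
    using a W by (auto simp: Xs_deriv Us_deriv)
  have "\<forall>s. ((\<lambda>s. Z s - Zs x0 y0 z0 u v w s) has_real_derivative 0) (at s)"
  proof
    fix s
    have "(Z has_real_derivative ((Xs x0 u w s)^2 + (Xs y0 v w s)^2) * w) (at s)"
      using a X Y W by metis
    then show "((\<lambda>s. Z s - Zs x0 y0 z0 u v w s) has_real_derivative 0) (at s)"
      using Zs_deriv[of x0 y0 z0 u v w s] DERIV_diff by fastforce
  qed
  then have "Z t = Zs x0 y0 z0 u v w t" for t
    using DERIV_isconst_all[of "\<lambda>s. Z s - Zs x0 y0 z0 u v w s" t 0] a by simp
  with X Y show ?thesis by auto
qed

lemma traj_eq: "normal_traj (x0,y0,z0) (u,v,w) = (\<lambda>t. (Xs x0 u w t, Xs y0 v w t, Zs x0 y0 z0 u v w t))"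
  unfolding normal_traj_def
proof (rule the_equality)
  show "\<exists>X Y Z U V W. normal_sys (x0, y0, z0) (u, v, w) X Y Z U V W \<and>
     (\<lambda>t. (Xs x0 u w t, Xs y0 v w t, Zs x0 y0 z0 u v w t)) = (\<lambda>t. (X t, Y t, Z t))"
    using sol_sys by blast
next
  fix \<gamma>
  assume "\<exists>X Y Z U V W. normal_sys (x0, y0, z0) (u, v, w) X Y Z U V W \<and> \<gamma> = (\<lambda>t. (X t, Y t, Z t))"
  then show "\<gamma> = (\<lambda>t. (Xs x0 u w t, Xs y0 v w t, Zs x0 y0 z0 u v w t))"
    using sys_unique by blast
qed

lemma Exp_eq: "Exp_map (x0,y0,z0) (u,v,w) = (Xs x0 u w 1, Xs y0 v w 1, Zs x0 y0 z0 u v w 1)"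
  unfolding Exp_map_def traj_eq by simp



lemma comp_derivs:
  fixes F :: "real \<times> real \<times> real \<Rightarrow> real \<times> real \<times> real"
  assumes "(F has_derivative D) (at p)"
  shows "((\<lambda>h. fst (F (p + h *\<^sub>R e))) has_real_derivative fst (D e)) (at 0)"
    "((\<lambda>h. fst (snd (F (p + h *\<^sub>R e)))) has_real_derivative fst (snd (D e))) (at 0)"
    "((\<lambda>h. snd (snd (F (p + h *\<^sub>R e)))) has_real_derivative snd (snd (D e))) (at 0)"
proof -
  have l: "((\<lambda>h::real. p + h *\<^sub>R e) has_derivative (\<lambda>h. h *\<^sub>R e)) (at 0)"
    by (auto intro!: derivative_eq_intros)
  have "((F \<circ> (\<lambda>h::real. p + h *\<^sub>R e)) has_derivative (D \<circ> (\<lambda>h. h *\<^sub>R e))) (at 0)"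
    by (rule diff_chain_at[OF l]) (simp add: assms)
  moreover have "D \<circ> (\<lambda>h. h *\<^sub>R e) = (\<lambda>h. h *\<^sub>R D e)"
    using linear_scale[OF has_derivative_linear[OF assms]] by (auto simp: o_def)
  ultimately have G: "((\<lambda>h. F (p + h *\<^sub>R e)) has_derivative (\<lambda>h. h *\<^sub>R D e)) (at 0)"
    by (simp add: o_def)
  have "((\<lambda>h. fst (F (p + h *\<^sub>R e))) has_derivative (\<lambda>h. fst (h *\<^sub>R D e))) (at 0)"
    using has_derivative_fst[OF G] .
  then show "((\<lambda>h. fst (F (p + h *\<^sub>R e))) has_real_derivative fst (D e)) (at 0)"
    unfolding has_field_derivative_def by (rule has_derivative_eq_rhs) (simp add: fun_eq_iff)
  have "((\<lambda>h. fst (snd (F (p + h *\<^sub>R e)))) has_derivative (\<lambda>h. fst (snd (h *\<^sub>R D e)))) (at 0)"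
    using has_derivative_fst[OF has_derivative_snd[OF G]] .
  then show "((\<lambda>h. fst (snd (F (p + h *\<^sub>R e)))) has_real_derivative fst (snd (D e))) (at 0)"
    unfolding has_field_derivative_def by (rule has_derivative_eq_rhs) (simp add: fun_eq_iff)
  have "((\<lambda>h. snd (snd (F (p + h *\<^sub>R e)))) has_derivative (\<lambda>h. snd (snd (h *\<^sub>R D e)))) (at 0)"
    using has_derivative_snd[OF has_derivative_snd[OF G]] .
  then show "((\<lambda>h. snd (snd (F (p + h *\<^sub>R e)))) has_real_derivative snd (snd (D e))) (at 0)"
    unfolding has_field_derivative_def by (rule has_derivative_eq_rhs) (simp add: fun_eq_iff)
qed

lemma lin_decomp:
  fixes D :: "real \<times> real \<times> real \<Rightarrow> real \<times> real \<times> real"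
  assumes "linear D"
  shows "D (a,b,c) = a *\<^sub>R D (1,0,0) + b *\<^sub>R D (0,1,0) + c *\<^sub>R D (0,0,1)"
proof -
  have "(a,b,c) = a *\<^sub>R (1,0,0) + b *\<^sub>R (0,1,0) + c *\<^sub>R ((0,0,1)::real \<times> real \<times> real)"
    by simp
  then have "D (a,b,c) = D (a *\<^sub>R (1,0,0) + b *\<^sub>R (0,1,0) + c *\<^sub>R (0,0,1))" by simp
  also have "\<dots> = a *\<^sub>R D (1,0,0) + b *\<^sub>R D (0,1,0) + c *\<^sub>R D (0,0,1)"
    by (simp only: linear_add[OF assms] linear_scale[OF assms])
  finally show ?thesis .
qed

lemma surj_lemma:
  fixes D :: "real \<times> real \<times> real \<Rightarrow> real \<times> real \<times> real"
  assumes lin: "linear D" and d1: "D (1,0,0) = (s,0,zu)" and d2: "D (0,1,0) = (0,s,zv)"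
    and d3: "D (0,0,1) = (A,B,zw)" and s: "s \<noteq> 0" and K: "s * zw - A * zu - B * zv \<noteq> 0"
  shows "surj D"
proof -
  have "y \<in> range D" for y
  proof -
    obtain p q r where y: "y = (p,q,r)" by (cases y) auto
    define c3 where "c3 = (s * r - p * zu - q * zv) / (s * zw - A * zu - B * zv)"
    define c1 where "c1 = (p - c3 * A)/s"
    define c2 where "c2 = (q - c3 * B)/s"
    have "D (c1,c2,c3) = (c1 * s + c3 * A, c2 * s + c3 * B, c1 * zu + c2 * zv + c3 * zw)"
      using lin_decomp[OF lin] d1 d2 d3 by simp
    also have "\<dots> = (p,q,r)"
    proof -
      have e1: "c1 * s + c3 * A = p" using s by (simp add: c1_def field_simps)
      have e2: "c2 * s + c3 * B = q" using s by (simp add: c2_def field_simps)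
      have "c1 * zu + c2 * zv + c3 * zw = ((p * zu + q * zv) + c3 * (s * zw - A * zu - B * zv))/s"
        using s by (simp add: c1_def c2_def field_simps)
      also have "\<dots> = r"
      proof -
        have "c3 * (s * zw - A * zu - B * zv) = s * r - p * zu - q * zv" using K by (simp add: c3_def)
        then show ?thesis using s by (simp add: field_simps)
      qed
      finally show ?thesis using e1 e2 by simp
    qed
    finally show ?thesis using y by (metis rangeI)
  qed
  then show ?thesis by blast
qed

lemma nonsurj_lemma:
  fixes D :: "real \<times> real \<times> real \<Rightarrow> real \<times> real \<times> real"
  assumes lin: "linear D" and "fst (D (1,0,0)) = 0" "fst (snd (D (1,0,0))) = 0"
    "fst (D (0,1,0)) = 0" "fst (snd (D (0,1,0))) = 0"
  shows "\<not> surj D"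
proof
  assume "surj D"
  then obtain h k where h: "D h = (1,0,0)" and k: "D k = (0,1,0)" by (metis surjD)
  obtain a b c where hh: "h = (a,b,c)" by (cases h) auto
  obtain a' b' c' where kk: "k = (a',b',c')" by (cases k) auto
  obtain A B Z where d3: "D (0,0,1) = (A,B,Z)" by (cases "D (0,0,1)") auto
  have "c * A = 1" "c * B = 0" "c' * A = 0" "c' * B = 1"
    using h k lin_decomp[OF lin, of a b c] lin_decomp[OF lin, of a' b' c'] hh kk d3 assms
    by (auto simp: prod_eq_iff)
  then show False
    by (metis mult_eq_0_iff zero_neq_one)
qed

lemma pos_lemma:
  fixes al be ga si rh :: real
  assumes al: "al > 0" and ga: "ga \<ge> 0" and cs: "be^2 \<le> al * ga" and si: "si > 0" and sr: "si < 4 * rh"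
  shows "si * al + si * be + ga * rh > 0"
proof (cases "ga = 0")
  case True
  then have "be = 0" using cs by simp
  then show ?thesis using True al si by simp
next
  case False
  then have gp: "ga > 0" using ga by simp
  have rh: "rh > 0" using si sr by simp
  have X: "si * al + ga * rh > 0" using al gp si rh by (simp add: add_pos_pos)
  have "(si * al + ga * rh)^2 \<ge> 4 * (si * al) * (ga * rh)"
    using sum_squares_ge_zero[of "si * al - ga * rh" 0] by (simp add: power2_eq_square algebra_simps)
  moreover have "4 * (si * al) * (ga * rh) > si^2 * (al * ga)"
  proof -
    have "si * (al * ga) > 0" using si al gp by simp
    then have "si * (al * ga) * si < si * (al * ga) * (4 * rh)" using sr by (simp add: mult_strict_left_mono)
    then show ?thesis by (simp add: power2_eq_square algebra_simps)
  qed
  moreover have "si^2 * (al * ga) \<ge> si^2 * be^2" using cs by (simp add: mult_left_mono)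
  ultimately have "\<bar>si * be\<bar>^2 < (si * al + ga * rh)^2" by (simp add: power_mult_distrib)
  then have "\<bar>si * be\<bar> < si * al + ga * rh" using X by (simp add: power2_less_imp_less less_imp_le)
  then show ?thesis by linarith
qed

lemma trig1: "0 < w \<Longrightarrow> w < pi \<Longrightarrow> sin w - w * cos w > 0"
proof -
  assume w: "0 < w" "w < pi"
  have "(\<lambda>x. sin x - x * cos x) 0 < (\<lambda>x. sin x - x * cos x) w"
  proof (rule DERIV_pos_imp_increasing_open[OF w(1)])
    fix x assume x: "0 < x" "x < w"
    have "((\<lambda>x. sin x - x * cos x) has_real_derivative x * sin x) (at x)"
      by (auto intro!: derivative_eq_intros)
    moreover have "x * sin x > 0" using x w by (simp add: sin_gt_zero)
    ultimately show "\<exists>y. ((\<lambda>x. sin x - x * cos x) has_real_derivative y) (at x) \<and> 0 < y" by blast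
  next
    show "continuous_on {0..w} (\<lambda>x. sin x - x * cos x)" by (intro continuous_intros)
  qed
  then show ?thesis by simp
qed

lemma trig2: "0 < w \<Longrightarrow> w < pi \<Longrightarrow> w^2 * sin w < 4 * (sin w - w * cos w)"
proof -
  assume w: "0 < w" "w < pi"
  have "(\<lambda>x. 4 * (sin x - x * cos x) - x^2 * sin x) 0 < (\<lambda>x. 4 * (sin x - x * cos x) - x^2 * sin x) w"
  proof (rule DERIV_pos_imp_increasing_open[OF w(1)])
    fix x assume x: "0 < x" "x < w"
    have "((\<lambda>x. 4 * (sin x - x * cos x) - x^2 * sin x) has_real_derivative x * (sin x + (sin x - x * cos x))) (at x)"
      by (auto intro!: derivative_eq_intros simp: algebra_simps power2_eq_square)
    moreover have "x * (sin x + (sin x - x * cos x)) > 0" using x w trig1[of x] sin_gt_zero[of x] by (intro mult_pos_pos) auto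
    ultimately show "\<exists>y. ((\<lambda>x. 4 * (sin x - x * cos x) - x^2 * sin x) has_real_derivative y) (at x) \<and> 0 < y" by blast
  next
    show "continuous_on {0..w} (\<lambda>x. 4 * (sin x - x * cos x) - x^2 * sin x)" by (intro continuous_intros)
  qed
  then show ?thesis by simp
qed

lemma L1: "((\<lambda>h::real. (h + sin h * cos h)/(2 * h)) \<longlongrightarrow> 1) (at 0)" by real_asymp
lemma L2: "((\<lambda>h::real. (sin h)^2/h/h) \<longlongrightarrow> 1) (at 0)" by real_asymp
lemma L3: "((\<lambda>h::real. (h - sin h * cos h)/(2 * h^2)/h) \<longlongrightarrow> 1/3) (at 0)" by real_asymp



definition EF :: "real \<Rightarrow> real \<Rightarrow> real \<Rightarrow> real \<times> real \<times> real \<Rightarrow> real \<times> real \<times> real" where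
  "EF x0 y0 z0 p = (x0 * cos (snd (snd p)) + fst p * sin (snd (snd p)) / snd (snd p),
     y0 * cos (snd (snd p)) + fst (snd p) * sin (snd (snd p)) / snd (snd p),
     z0 + (x0^2 + y0^2) * (snd (snd p) + sin (snd (snd p)) * cos (snd (snd p))) / 2
       + (x0 * fst p + y0 * fst (snd p)) * (sin (snd (snd p)))^2 / snd (snd p)
       + ((fst p)^2 + (fst (snd p))^2) * (snd (snd p) - sin (snd (snd p)) * cos (snd (snd p))) / (2 * (snd (snd p))^2))"

lemma Exp_EF: "w \<noteq> 0 \<Longrightarrow> Exp_map (x0,y0,z0) (u,v,w) = EF x0 y0 z0 (u,v,w)"
  unfolding Exp_eq EF_def Xs_def Zs_def by simp

lemma Exp_EF': "snd (snd p) \<noteq> 0 \<Longrightarrow> Exp_map (x0,y0,z0) p = EF x0 y0 z0 p"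
  using Exp_EF[of "snd (snd p)" x0 y0 z0 "fst p" "fst (snd p)"] by simp

lemma EF_diff: "snd (snd p) \<noteq> 0 \<Longrightarrow> \<exists>D. (EF x0 y0 z0 has_derivative D) (at p)"
  unfolding EF_def[abs_def]
  by (rule exI, (rule derivative_intros | simp)+)

lemma open_w: "open {p :: real \<times> real \<times> real. snd (snd p) \<noteq> 0}"
  by (intro open_Collect_neq continuous_intros)

lemma Exp_to_EF:
  assumes "(Exp_map (x0,y0,z0) has_derivative D) (at p)" "snd (snd p) \<noteq> 0"
  shows "(EF x0 y0 z0 has_derivative D) (at p)"
  by (rule has_derivative_transform_within_open[OF assms(1) open_w]) (use assms(2) Exp_EF' in auto)

lemma EF_to_Exp:
  assumes "(EF x0 y0 z0 has_derivative D) (at p)" "snd (snd p) \<noteq> 0"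
  shows "(Exp_map (x0,y0,z0) has_derivative D) (at p)"
  by (rule has_derivative_transform_within_open[OF assms(1) open_w]) (use assms(2) Exp_EF' in auto)

lemma pe1: "((u,v,w) + h *\<^sub>R (1,0,0) :: real \<times> real \<times> real) = (u + h, v, w)" by simp
lemma pe2: "((u,v,w) + h *\<^sub>R (0,1,0) :: real \<times> real \<times> real) = (u, v + h, w)" by simp
lemma pe3: "((u,v,w) + h *\<^sub>R (0,0,1) :: real \<times> real \<times> real) = (u, v, w + h)" by simp

context
  fixes x0 y0 z0 u v w :: real
  assumes w: "w \<noteq> 0"
begin

lemma P1x: "((\<lambda>h. fst (EF x0 y0 z0 ((u,v,w) + h *\<^sub>R (1,0,0)))) has_real_derivative sin w / w) (at 0)"
  unfolding pe1 EF_def using w by (auto intro!: derivative_eq_intros)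
lemma P1y: "((\<lambda>h. fst (snd (EF x0 y0 z0 ((u,v,w) + h *\<^sub>R (1,0,0))))) has_real_derivative 0) (at 0)"
  unfolding pe1 EF_def by (auto intro!: derivative_eq_intros)
lemma P1z: "((\<lambda>h. snd (snd (EF x0 y0 z0 ((u,v,w) + h *\<^sub>R (1,0,0))))) has_real_derivative
   x0 * (sin w)^2 / w + u * (w - sin w * cos w) / w^2) (at 0)"
  unfolding pe1 EF_def using w by (auto intro!: derivative_eq_intros simp: field_simps power2_eq_square)
lemma P2x: "((\<lambda>h. fst (EF x0 y0 z0 ((u,v,w) + h *\<^sub>R (0,1,0)))) has_real_derivative 0) (at 0)"
  unfolding pe2 EF_def by (auto intro!: derivative_eq_intros)
lemma P2y: "((\<lambda>h. fst (snd (EF x0 y0 z0 ((u,v,w) + h *\<^sub>R (0,1,0))))) has_real_derivative sin w / w) (at 0)"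
  unfolding pe2 EF_def using w by (auto intro!: derivative_eq_intros)
lemma P2z: "((\<lambda>h. snd (snd (EF x0 y0 z0 ((u,v,w) + h *\<^sub>R (0,1,0))))) has_real_derivative
   y0 * (sin w)^2 / w + v * (w - sin w * cos w) / w^2) (at 0)"
  unfolding pe2 EF_def using w by (auto intro!: derivative_eq_intros simp: field_simps power2_eq_square)
lemma P3x: "((\<lambda>h. fst (EF x0 y0 z0 ((u,v,w) + h *\<^sub>R (0,0,1)))) has_real_derivative
   - x0 * sin w + u * (cos w * w - sin w) / w^2) (at 0)"
  unfolding pe3 EF_def using w by (auto intro!: derivative_eq_intros simp: field_simps power2_eq_square)
lemma P3y: "((\<lambda>h. fst (snd (EF x0 y0 z0 ((u,v,w) + h *\<^sub>R (0,0,1))))) has_real_derivative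
   - y0 * sin w + v * (cos w * w - sin w) / w^2) (at 0)"
  unfolding pe3 EF_def using w by (auto intro!: derivative_eq_intros simp: field_simps power2_eq_square)
lemma P3z: "((\<lambda>h. snd (snd (EF x0 y0 z0 ((u,v,w) + h *\<^sub>R (0,0,1))))) has_real_derivative
   (x0^2 + y0^2) * (1 + cos w * cos w - sin w * sin w) / 2
   + (x0 * u + y0 * v) * (2 * sin w * cos w * w - sin w * sin w) / w^2
   + (u^2 + v^2) * (sin w * sin w * w - w + sin w * cos w) / w^3) (at 0)"
  unfolding pe3 EF_def using w apply (auto intro!: derivative_eq_intros simp: field_simps power2_eq_square power3_eq_cube)
  using sin_cos_squared_add3[of w] by algebra

end


lemma Kid:
  fixes S C w x0 y0 u v :: real
  assumes sc: "C * C + S * S = 1" and w: "w \<noteq> 0"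
  shows "(S / w) * ((x0^2 + y0^2) * (1 + C * C - S * S) / 2
     + (x0 * u + y0 * v) * (2 * S * C * w - S * S) / w^2
     + (u^2 + v^2) * (S * S * w - w + S * C) / w^3)
   - (- x0 * S + u * (C * w - S) / w^2) * (x0 * S^2 / w + u * (w - S * C) / w^2)
   - (- y0 * S + v * (C * w - S) / w^2) * (y0 * S^2 / w + v * (w - S * C) / w^2)
   = (S / w) * (x0^2 + y0^2) + (S / w) * (x0 * u + y0 * v) + (u^2 + v^2) * ((S - w * C) / w^3)"
  using w apply (simp add: field_simps power2_eq_square power3_eq_cube)
  using sc by algebra

lemma sig_rho:
  fixes w :: real
  assumes "w \<noteq> 0" "\<bar>w\<bar> < pi"
  shows "sin w / w > 0" "sin w / w < 4 * ((sin w - w * cos w) / w^3)"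
proof -
  have "sin w / w > 0 \<and> sin w / w < 4 * ((sin w - w * cos w) / w^3)"
  proof (cases "w > 0")
    case True
    then have "w < pi" using assms by simp
    have a: "sin w > 0" using True \<open>w < pi\<close> by (simp add: sin_gt_zero)
    have b: "w^2 * sin w < 4 * (sin w - w * cos w)" using trig2 True \<open>w < pi\<close> by simp
    have "sin w / w < 4 * ((sin w - w * cos w) / w^3)"
      using b True by (simp add: field_simps power2_eq_square power3_eq_cube)
    then show ?thesis using a True by simp
  next
    case False
    define a where "a = - w"
    have a0: "a > 0" "a < pi" using False assms by (auto simp: a_def)
    have wa: "w = - a" by (simp add: a_def)
    have s: "sin a > 0" using a0 by (simp add: sin_gt_zero)
    have b: "a^2 * sin a < 4 * (sin a - a * cos a)" using trig2 a0 by simp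
    have "sin a / a < 4 * ((sin a - a * cos a) / a^3)"
      using b a0 by (simp add: field_simps power2_eq_square power3_eq_cube)
    moreover have q1: "sin w / w = sin a / a" unfolding wa by simp
    moreover have q2: "(sin w - w * cos w) / w^3 = (sin a - a * cos a) / a^3"
      unfolding wa using a0 by (simp add: field_simps power3_eq_cube)
    ultimately show ?thesis using s a0 by simp
  qed
  then show "sin w / w > 0" "sin w / w < 4 * ((sin w - w * cos w) / w^3)" by auto
qed

lemma cauchy2: "(x0 * u + y0 * v)^2 \<le> ((x0::real)^2 + y0^2) * (u^2 + v^2)"
proof -
  have "(x0 * u + y0 * v)^2 + (x0 * v - y0 * u)^2 = (x0^2 + y0^2) * (u^2 + v^2)" by algebra
  moreover have "(x0 * v - y0 * u)^2 \<ge> 0" by simp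
  ultimately show ?thesis by linarith
qed

lemma NC1:
  assumes al: "x0^2 + y0^2 > 0" and w: "w \<noteq> 0" and wp: "\<bar>w\<bar> < pi"
  shows "\<not> critical_point (Exp_map (x0,y0,z0)) (u,v,w)"
proof
  assume "critical_point (Exp_map (x0,y0,z0)) (u,v,w)"
  then obtain D where D: "(Exp_map (x0,y0,z0) has_derivative D) (at (u,v,w))" "\<not> surj D"
    unfolding critical_point_def by blast
  have DE: "(EF x0 y0 z0 has_derivative D) (at (u,v,w))" using Exp_to_EF[OF D(1)] w by simp
  note c1 = comp_derivs[OF DE, of "(1,0,0)"]
  note c2 = comp_derivs[OF DE, of "(0,1,0)"]
  note c3 = comp_derivs[OF DE, of "(0,0,1)"]
  have e1: "D (1,0,0) = (sin w / w, 0, x0 * (sin w)^2 / w + u * (w - sin w * cos w) / w^2)"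
    using DERIV_unique[OF c1(1) P1x[OF w]] DERIV_unique[OF c1(2) P1y[OF w]] DERIV_unique[OF c1(3) P1z[OF w]]
    by (simp add: prod_eq_iff)
  have e2: "D (0,1,0) = (0, sin w / w, y0 * (sin w)^2 / w + v * (w - sin w * cos w) / w^2)"
    using DERIV_unique[OF c2(1) P2x[OF w]] DERIV_unique[OF c2(2) P2y[OF w]] DERIV_unique[OF c2(3) P2z[OF w]]
    by (simp add: prod_eq_iff)
  have e3: "D (0,0,1) = (- x0 * sin w + u * (cos w * w - sin w) / w^2, - y0 * sin w + v * (cos w * w - sin w) / w^2,
     (x0^2 + y0^2) * (1 + cos w * cos w - sin w * sin w) / 2
   + (x0 * u + y0 * v) * (2 * sin w * cos w * w - sin w * sin w) / w^2
   + (u^2 + v^2) * (sin w * sin w * w - w + sin w * cos w) / w^3)"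
    using DERIV_unique[OF c3(1) P3x[OF w]] DERIV_unique[OF c3(2) P3y[OF w]] DERIV_unique[OF c3(3) P3z[OF w]]
    by (simp add: prod_eq_iff)
  have sr: "sin w / w > 0" "sin w / w < 4 * ((sin w - w * cos w) / w^3)" using sig_rho[OF w wp] by auto
  have pos: "(sin w / w) * (x0^2 + y0^2) + (sin w / w) * (x0 * u + y0 * v) + (u^2 + v^2) * ((sin w - w * cos w) / w^3) > 0"
    by (rule pos_lemma[OF al _ cauchy2 sr]) simp
  have "surj D"
  proof (rule surj_lemma[OF has_derivative_linear[OF DE] e1 e2 e3])
    show "sin w / w \<noteq> 0" by (metis sr(1) order_less_irrefl)
    show "sin w / w * ((x0^2 + y0^2) * (1 + cos w * cos w - sin w * sin w) / 2
   + (x0 * u + y0 * v) * (2 * sin w * cos w * w - sin w * sin w) / w^2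
   + (u^2 + v^2) * (sin w * sin w * w - w + sin w * cos w) / w^3) -
    (- x0 * sin w + u * (cos w * w - sin w) / w^2) * (x0 * (sin w)^2 / w + u * (w - sin w * cos w) / w^2) -
    (- y0 * sin w + v * (cos w * w - sin w) / w^2) * (y0 * (sin w)^2 / w + v * (w - sin w * cos w) / w^2) \<noteq> 0"
      using Kid[of "cos w" "sin w" w x0 y0 u v, OF sin_cos_squared_add3 w] pos by (simp add: mult.commute)
  qed
  then show False using D(2) by simp
qed


lemma Crit:
  assumes w: "w \<noteq> 0" and s: "sin w = 0"
  shows "critical_point (Exp_map (x0,y0,z0)) (u,v,w)"
proof -
  obtain D where DE: "(EF x0 y0 z0 has_derivative D) (at (u,v,w))" using EF_diff[of "(u,v,w)" x0 y0 z0] w by auto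
  note c1 = comp_derivs[OF DE, of "(1,0,0)"]
  note c2 = comp_derivs[OF DE, of "(0,1,0)"]
  have "fst (D (1,0,0)) = 0" using DERIV_unique[OF c1(1) P1x[OF w]] s by simp
  moreover have "fst (snd (D (1,0,0))) = 0" using DERIV_unique[OF c1(2) P1y[OF w]] by simp
  moreover have "fst (D (0,1,0)) = 0" using DERIV_unique[OF c2(1) P2x[OF w]] by simp
  moreover have "fst (snd (D (0,1,0))) = 0" using DERIV_unique[OF c2(2) P2y[OF w]] s by simp
  ultimately have "\<not> surj D" by (intro nonsurj_lemma[OF has_derivative_linear[OF DE]])
  moreover have "(Exp_map (x0,y0,z0) has_derivative D) (at (u,v,w))" using EF_to_Exp[OF DE] w by simp
  ultimately show ?thesis unfolding critical_point_def by blast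
qed

lemma Q1x: "((\<lambda>h. fst (Exp_map (x0,y0,z0) ((u,v,0) + h *\<^sub>R (1,0,0)))) has_real_derivative 1) (at 0)"
  unfolding pe1 Exp_eq by (simp add: Xs_def) (auto intro!: derivative_eq_intros)
lemma Q1y: "((\<lambda>h. fst (snd (Exp_map (x0,y0,z0) ((u,v,0) + h *\<^sub>R (1,0,0))))) has_real_derivative 0) (at 0)"
  unfolding pe1 Exp_eq by (simp add: Xs_def)
lemma Q1z: "((\<lambda>h. snd (snd (Exp_map (x0,y0,z0) ((u,v,0) + h *\<^sub>R (1,0,0))))) has_real_derivative 0) (at 0)"
  unfolding pe1 Exp_eq by (simp add: Zs_def)
lemma Q2x: "((\<lambda>h. fst (Exp_map (x0,y0,z0) ((u,v,0) + h *\<^sub>R (0,1,0)))) has_real_derivative 0) (at 0)"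
  unfolding pe2 Exp_eq by (simp add: Xs_def)
lemma Q2y: "((\<lambda>h. fst (snd (Exp_map (x0,y0,z0) ((u,v,0) + h *\<^sub>R (0,1,0))))) has_real_derivative 1) (at 0)"
  unfolding pe2 Exp_eq by (simp add: Xs_def) (auto intro!: derivative_eq_intros)
lemma Q2z: "((\<lambda>h. snd (snd (Exp_map (x0,y0,z0) ((u,v,0) + h *\<^sub>R (0,1,0))))) has_real_derivative 0) (at 0)"
  unfolding pe2 Exp_eq by (simp add: Zs_def)

lemma Q3z: "((\<lambda>h. snd (snd (Exp_map (x0,y0,z0) ((u,v,0) + h *\<^sub>R (0,0,1))))) has_real_derivative
   (x0^2 + y0^2) + (x0 * u + y0 * v) + (u^2 + v^2) * (1/3)) (at 0)"
proof -
  let ?f = "\<lambda>h. snd (snd (Exp_map (x0,y0,z0) ((u,v,0) + h *\<^sub>R (0,0,1))))"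
  have f: "?f h = Zs x0 y0 z0 u v h 1" for h unfolding pe3 Exp_eq by simp
  have lim: "((\<lambda>h. (x0^2 + y0^2) * ((h + sin h * cos h)/(2 * h)) + (x0 * u + y0 * v) * ((sin h)^2/h/h)
      + (u^2 + v^2) * ((h - sin h * cos h)/(2 * h^2)/h)) \<longlongrightarrow>
      (x0^2 + y0^2) * 1 + (x0 * u + y0 * v) * 1 + (u^2 + v^2) * (1/3)) (at 0)"
    by (intro tendsto_intros L1 L2 L3)
  have ev: "eventually (\<lambda>h. (x0^2 + y0^2) * ((h + sin h * cos h)/(2 * h)) + (x0 * u + y0 * v) * ((sin h)^2/h/h)
      + (u^2 + v^2) * ((h - sin h * cos h)/(2 * h^2)/h) = (?f (0 + h) - ?f 0) / h) (at (0::real))"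
  proof -
    have "eventually (\<lambda>h::real. h \<noteq> 0) (at 0)" by (simp add: eventually_at_filter)
    then show ?thesis
    proof (rule eventually_mono)
      fix h :: real assume h: "h \<noteq> 0"
      show "(x0^2 + y0^2) * ((h + sin h * cos h)/(2 * h)) + (x0 * u + y0 * v) * ((sin h)^2/h/h)
      + (u^2 + v^2) * ((h - sin h * cos h)/(2 * h^2)/h) = (?f (0 + h) - ?f 0) / h"
        unfolding f using h by (simp add: Zs_def field_simps)
    qed
  qed
  show ?thesis unfolding DERIV_def using Lim_transform_eventually[OF lim ev] by simp
qed

lemma NC0:
  assumes al: "x0^2 + y0^2 > 0"
  shows "\<not> critical_point (Exp_map (x0,y0,z0)) (u,v,0)"
proof
  assume "critical_point (Exp_map (x0,y0,z0)) (u,v,0)"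
  then obtain D where D: "(Exp_map (x0,y0,z0) has_derivative D) (at (u,v,0))" "\<not> surj D"
    unfolding critical_point_def by blast
  note c1 = comp_derivs[OF D(1), of "(1,0,0)"]
  note c2 = comp_derivs[OF D(1), of "(0,1,0)"]
  note c3 = comp_derivs[OF D(1), of "(0,0,1)"]
  have e1: "D (1,0,0) = (1, 0, 0)"
    using DERIV_unique[OF c1(1) Q1x] DERIV_unique[OF c1(2) Q1y] DERIV_unique[OF c1(3) Q1z]
    by (simp add: prod_eq_iff)
  have e2: "D (0,1,0) = (0, 1, 0)"
    using DERIV_unique[OF c2(1) Q2x] DERIV_unique[OF c2(2) Q2y] DERIV_unique[OF c2(3) Q2z]
    by (simp add: prod_eq_iff)
  have e3: "D (0,0,1) = (fst (D (0,0,1)), fst (snd (D (0,0,1))),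
      (x0^2 + y0^2) + (x0 * u + y0 * v) + (u^2 + v^2) * (1/3))"
    using DERIV_unique[OF c3(3) Q3z] by (simp add: prod_eq_iff)
  have pos: "1 * (x0^2 + y0^2) + 1 * (x0 * u + y0 * v) + (u^2 + v^2) * (1/3) > 0"
    by (rule pos_lemma[OF al _ cauchy2]) auto
  have "surj D"
    by (rule surj_lemma[OF has_derivative_linear[OF D(1)] e1 e2 e3]) (use pos in auto)
  then show False using D(2) by simp
qed

theorem theorem13:
  fixes x0 y0 z0 u0 v0 w0 :: real
  assumes "x0\<^sup>2 + y0\<^sup>2 \<noteq> 0"
    and "u0\<^sup>2 + v0\<^sup>2 + (x0\<^sup>2 + y0\<^sup>2) * w0\<^sup>2 = 1"
  shows "t_con (x0, y0, z0) (u0, v0, w0) = (if w0 = 0 then \<infinity> else ereal (pi / \<bar>w0\<bar>))"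
proof -
  have al: "x0^2 + y0^2 > 0" using assms(1) by (simp add: add_pos_nonneg order_le_neq_trans sum_power2_ge_zero)
  define S where "S = {t. t > 0 \<and> critical_point (Exp_map (x0,y0,z0)) (t *\<^sub>R (u0,v0,w0))}"
  have sc: "t *\<^sub>R (u0,v0,w0) = (t * u0, t * v0, t * w0)" for t by simp
  have tc: "t_con (x0, y0, z0) (u0, v0, w0) = Inf (ereal ` S)" unfolding t_con_def S_def ..
  show ?thesis
  proof (cases "w0 = 0")
    case True
    have "S = {}" unfolding S_def sc using NC0[OF al] True by auto
    then show ?thesis using tc True by (simp add: top_ereal_def)
  next
    case False
    define T where "T = pi / \<bar>w0\<bar>"
    have T0: "T > 0" using False by (simp add: T_def)
    have TS: "T \<in> S"
    proof -
      have "T * w0 = pi \<or> T * w0 = - pi" using False by (auto simp: T_def abs_if)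
      then have "sin (T * w0) = 0" "T * w0 \<noteq> 0" by auto
      then show ?thesis unfolding S_def sc using Crit T0 by auto
    qed
    have low: "T \<le> t" if "t \<in> S" for t
    proof (rule ccontr)
      assume "\<not> T \<le> t"
      then have tT: "t < T" by simp
      have t0: "t > 0" and cr: "critical_point (Exp_map (x0,y0,z0)) (t * u0, t * v0, t * w0)"
        using that unfolding S_def sc by auto
      have "\<bar>t * w0\<bar> < pi"
      proof -
        have "\<bar>t * w0\<bar> = t * \<bar>w0\<bar>" using t0 by (simp add: abs_mult)
        also have "\<dots> < T * \<bar>w0\<bar>" using tT False by simp
        also have "\<dots> = pi" using False by (simp add: T_def)
        finally show ?thesis .
      qed
      moreover have "t * w0 \<noteq> 0" using t0 False by simp
      ultimately show False using NC1[OF al] cr by blast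
    qed
    have "Inf (ereal ` S) = ereal T"
      by (rule cInf_eq_minimum) (use TS low in auto)
    then show ?thesis using tc False by (simp add: T_def)
  qed
qed

end
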